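(* Let $H$ be a discrete subgroup of the $\sigma$-compact locally compact (Hausdorff) group $G$, and let $\theta = \sum_{h\in H} c_h h \in \mathbb{C}H$. If $\sum_h c_h L_h f = 0$ for some nonzero $f \in L^2(G)$, then $\theta \ast k = 0$ for some nonzero $k \in \ell^2(H)$.
   Context: $L^2(G)$ is with respect to left Haar measure and $L_h f(x)=f(h^{-1}x)$. $\mathbb{C}H$ is the group ring of $H$ (finitely many nonzero $c_h$), and for $k=\sum_x b_x x\in\ell^2(H)$, $\theta\ast k=\sum_g\big(\sum_x c_{gx^{-1}}b_x\big)g$. *)

theory Defs
  imports "HOL-Analysis.Analysis"
begin

text \<open>The group G is the whole type 'g, written additively (group_add need not be
commutative); so the inverse of h is -h and L_h f (x) = f (-h + x).\<close>

definition sigma_compact_group :: "'g::topological_space itself \<Rightarrow> bool" where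
  "sigma_compact_group _ \<longleftrightarrow>
     (\<exists>K :: nat \<Rightarrow> 'g set. (\<forall>n. compact (K n)) \<and> (\<Union>n. K n) = UNIV)"

definition left_haar_measure :: "'g::{topological_group_add, t2_space} measure \<Rightarrow> bool" where
  "left_haar_measure M \<longleftrightarrow>
     sets M = sets borel \<and>
     (\<forall>K. compact K \<longrightarrow> emeasure M K < \<infinity>) \<and>
     (\<forall>A\<in>sets borel. emeasure M A = (INF U\<in>{U. open U \<and> A \<subseteq> U}. emeasure M U)) \<and>
     (\<forall>U. open U \<longrightarrow> emeasure M U = (SUP K\<in>{K. compact K \<and> K \<subseteq> U}. emeasure M K)) \<and>
     emeasure M (space M) \<noteq> 0 \<and>
     (\<forall>g. \<forall>A\<in>sets borel. emeasure M ((\<lambda>x. g + x) ` A) = emeasure M A)"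

definition discrete_subgroup :: "'g::topological_group_add set \<Rightarrow> bool" where
  "discrete_subgroup H \<longleftrightarrow>
     0 \<in> H \<and> (\<forall>x\<in>H. \<forall>y\<in>H. x + y \<in> H) \<and> (\<forall>x\<in>H. - x \<in> H) \<and>
     (\<forall>h\<in>H. \<exists>U. open U \<and> U \<inter> H = {h})"

definition in_L2 :: "'g measure \<Rightarrow> ('g \<Rightarrow> complex) \<Rightarrow> bool" where
  "in_L2 M f \<longleftrightarrow> f \<in> borel_measurable M \<and> integrable M (\<lambda>x. (cmod (f x))\<^sup>2)"

definition in_l2 :: "'g set \<Rightarrow> ('g \<Rightarrow> complex) \<Rightarrow> bool" where
  "in_l2 H k \<longleftrightarrow> (\<forall>x. x \<notin> H \<longrightarrow> k x = 0) \<and> (\<lambda>x. (cmod (k x))\<^sup>2) summable_on H"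

definition conv_gr :: "'g::group_add set \<Rightarrow> ('g \<Rightarrow> complex) \<Rightarrow> ('g \<Rightarrow> complex) \<Rightarrow> 'g \<Rightarrow> complex" where
  "conv_gr H c k g = (\<Sum>\<^sub>\<infinity>x\<in>H. c (g + - x) * k x)"

end

theory Submission imports Defs begin

lemma open_transl:
  fixes V :: "'g::topological_group_add set"
  assumes "open V" shows "open ((\<lambda>x. p + x) ` V)"
proof -
  have "(\<lambda>x. p + x) ` V = (\<lambda>x. -p + x) -` V"
  proof -
    have "x \<in> (\<lambda>x. p + x) ` V \<longleftrightarrow> -p + x \<in> V" for x
    proof
      assume "x \<in> (\<lambda>x. p + x) ` V" then obtain v where "v \<in> V" "x = p + v" by blast
      then show "-p + x \<in> V" by (simp add: add.assoc[symmetric])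
    next
      assume "-p + x \<in> V" then have "p + (-p + x) \<in> (\<lambda>x. p + x) ` V" by blast
      then show "x \<in> (\<lambda>x. p + x) ` V" by (simp add: add.assoc[symmetric])
    qed
    then show ?thesis by blast
  qed
  moreover have "continuous_on UNIV (\<lambda>x::'g. -p + x)" by (intro continuous_intros)
  ultimately show ?thesis using assms by (simp add: open_vimage)
qed

lemma discrete_subgroupD:
  fixes H :: "'g::topological_group_add set"
  assumes "discrete_subgroup H"
  shows "0 \<in> H" "\<And>x y. x \<in> H \<Longrightarrow> y \<in> H \<Longrightarrow> x + y \<in> H" "\<And>x. x \<in> H \<Longrightarrow> -x \<in> H"
    "\<exists>U. open U \<and> U \<inter> H = {0}"
proof -
  have d: "0 \<in> H \<and> (\<forall>x\<in>H. \<forall>y\<in>H. x + y \<in> H) \<and> (\<forall>x\<in>H. - x \<in> H) \<and> (\<forall>h\<in>H. \<exists>U. open U \<and> U \<inter> H = {h})"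
    using assms unfolding discrete_subgroup_def .
  show H0: "0 \<in> H" using d[THEN conjunct1] .
  show "\<And>x y. x \<in> H \<Longrightarrow> y \<in> H \<Longrightarrow> x + y \<in> H" using d[THEN conjunct2, THEN conjunct1] by blast
  show "\<And>x. x \<in> H \<Longrightarrow> -x \<in> H" using d[THEN conjunct2, THEN conjunct2, THEN conjunct1] by (rule bspec)
  show "\<exists>U. open U \<and> U \<inter> H = {0}" using d[THEN conjunct2, THEN conjunct2, THEN conjunct2] H0 by (rule bspec)
qed

lemma discrete_V:
  fixes H :: "'g::topological_group_add set"
  assumes "discrete_subgroup H"
  shows "\<exists>V. open V \<and> 0 \<in> V \<and> (\<forall>p h1 h2. h1 \<in> H \<longrightarrow> h2 \<in> H \<longrightarrow> h1 \<in> (\<lambda>x. p + x) ` V \<longrightarrow> h2 \<in> (\<lambda>x. p + x) ` V \<longrightarrow> h1 = h2)"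
proof -
  obtain U where U0: "open U \<and> U \<inter> H = {0}" using discrete_subgroupD(4)[OF assms] by (rule exE)
  have U: "open U" "U \<inter> H = {0}" using U0 by (rule conjunct1, rule conjunct2)
  have c: "continuous_on UNIV (\<lambda>z::'g\<times>'g. - fst z + snd z)" by (intro continuous_intros)
  have "open ((\<lambda>z::'g\<times>'g. - fst z + snd z) -` U)" using c U(1) by (simp add: open_vimage)
  moreover have "(0,0) \<in> (\<lambda>z::'g\<times>'g. - fst z + snd z) -` U" using U(2) by auto
  ultimately obtain A B where AB: "open A" "open B" "(0,0) \<in> A \<times> B" "A \<times> B \<subseteq> (\<lambda>z::'g\<times>'g. - fst z + snd z) -` U"
    by (rule open_prod_elim)
  show ?thesis
  proof (intro exI[of _ "A \<inter> B"] conjI allI impI)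
    show "open (A \<inter> B)" using AB by auto
    show "0 \<in> A \<inter> B" using AB by auto
    fix p h1 h2 assume h: "h1 \<in> H" "h2 \<in> H" "h1 \<in> (\<lambda>x. p + x) ` (A \<inter> B)" "h2 \<in> (\<lambda>x. p + x) ` (A \<inter> B)"
    then obtain a b where ab: "a \<in> A" "b \<in> B" "h1 = p + a" "h2 = p + b" by blast
    have e: "-h1 + h2 = -a + b" unfolding ab(3,4) by (simp only: minus_add add.assoc minus_add_cancel)
    have "(a, b) \<in> A \<times> B" using ab(1,2) by simp
    then have "(a, b) \<in> (\<lambda>z::'g\<times>'g. - fst z + snd z) -` U" using AB(4) by blast
    then have "-h1 + h2 \<in> U" unfolding e by simp
    moreover have "-h1 \<in> H" using discrete_subgroupD(3)[OF assms h(1)] .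
    then have "-h1 + h2 \<in> H" using discrete_subgroupD(2)[OF assms _ h(2)] by blast
    ultimately have z: "-h1 + h2 \<in> {0}" using U(2) by blast
    have "h2 = h1 + (-h1 + h2)" by (simp only: add_minus_cancel)
    also have "\<dots> = h1" using z by simp
    finally show "h1 = h2" by (rule sym)
  qed
qed

lemma compact_cover_transl:
  fixes C V :: "'g::topological_group_add set"
  assumes "compact C" "open V" "0 \<in> V"
  shows "\<exists>P. finite P \<and> C \<subseteq> (\<Union>p\<in>P. (\<lambda>x. p + x) ` V)"
proof -
  have "C \<subseteq> (\<Union>c\<in>C. (\<lambda>x. c + x) ` V)" using assms(3) by force
  then obtain P where "P \<subseteq> C" "finite P" "C \<subseteq> (\<Union>c\<in>P. (\<lambda>x. c + x) ` V)"
    using compactE_image[OF assms(1), of C "\<lambda>c. (\<lambda>x. c + x) ` V"] open_transl[OF assms(2)] by metis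
  then show ?thesis by blast
qed

lemma card_bound:
  fixes H C :: "'g::topological_group_add set"
  assumes "discrete_subgroup H" "compact C"
  shows "\<exists>m::nat. \<forall>x. finite (H \<inter> (\<lambda>y. x + y) ` C) \<and> card (H \<inter> (\<lambda>y. x + y) ` C) \<le> m"
proof -
  obtain V where V: "open V" "0 \<in> V" "\<And>p h1 h2. h1 \<in> H \<Longrightarrow> h2 \<in> H \<Longrightarrow> h1 \<in> (\<lambda>x. p + x) ` V \<Longrightarrow> h2 \<in> (\<lambda>x. p + x) ` V \<Longrightarrow> h1 = h2"
    using discrete_V[OF assms(1)] by blast
  obtain P where P: "finite P" "C \<subseteq> (\<Union>p\<in>P. (\<lambda>x. p + x) ` V)"
    using compact_cover_transl[OF assms(2) V(1,2)] by blast
  show ?thesis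
  proof (intro exI[of _ "card P"] allI)
    fix x
    define S where "S = H \<inter> (\<lambda>y. x + y) ` C"
    define g where "g h = (SOME p. p \<in> P \<and> h \<in> (\<lambda>z. (x + p) + z) ` V)" for h
    have g: "g h \<in> P \<and> h \<in> (\<lambda>z. (x + g h) + z) ` V" if "h \<in> S" for h
    proof -
      from that obtain c where c: "c \<in> C" "h = x + c" unfolding S_def by blast
      then obtain p v where "p \<in> P" "v \<in> V" "c = p + v" using P(2) by blast
      then have "\<exists>p. p \<in> P \<and> h \<in> (\<lambda>z. (x + p) + z) ` V" using c by (auto simp: add.assoc)
      then show ?thesis unfolding g_def by (rule someI_ex)
    qed
    have inj: "inj_on g S"
    proof (rule inj_onI)
      fix a b assume "a \<in> S" "b \<in> S" "g a = g b"
      then show "a = b" using g[of a] g[of b] V(3)[of a b "x + g a"] unfolding S_def by auto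
    qed
    have sub: "g ` S \<subseteq> P" using g by auto
    show "finite S \<and> card S \<le> card P"
      using inj_on_finite[OF inj sub P(1)] card_inj_on_le[OF inj sub P(1)] by simp
  qed
qed

lemma haarD:
  fixes M :: "'g::{topological_group_add, t2_space} measure"
  assumes "left_haar_measure M"
  shows "sets M = sets borel" "\<And>K. compact K \<Longrightarrow> emeasure M K < \<infinity>"
    "\<And>g A. A \<in> sets borel \<Longrightarrow> emeasure M ((\<lambda>x. g + x) ` A) = emeasure M A"
proof -
  have d: "sets M = sets borel \<and>
     (\<forall>K. compact K \<longrightarrow> emeasure M K < \<infinity>) \<and>
     (\<forall>A\<in>sets borel. emeasure M A = (INF U\<in>{U. open U \<and> A \<subseteq> U}. emeasure M U)) \<and>
     (\<forall>U. open U \<longrightarrow> emeasure M U = (SUP K\<in>{K. compact K \<and> K \<subseteq> U}. emeasure M K)) \<and>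
     emeasure M (space M) \<noteq> 0 \<and>
     (\<forall>g. \<forall>A\<in>sets borel. emeasure M ((\<lambda>x. g + x) ` A) = emeasure M A)"
    using assms unfolding left_haar_measure_def .
  show "sets M = sets borel" using d[THEN conjunct1] .
  show "\<And>K. compact K \<Longrightarrow> emeasure M K < \<infinity>"
    using d[THEN conjunct2, THEN conjunct1] by blast
  have e: "\<forall>g. \<forall>A\<in>sets borel. emeasure M ((\<lambda>x. g + x) ` A) = emeasure M A"
    using d[THEN conjunct2, THEN conjunct2, THEN conjunct2, THEN conjunct2, THEN conjunct2] .
  fix g :: 'g and A :: "'g set" assume a: "A \<in> sets borel"
  show "emeasure M ((\<lambda>x. g + x) ` A) = emeasure M A" using bspec[OF spec[OF e, of g] a] .
qed

lemma haar_basic: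
  fixes M :: "'g::{topological_group_add, t2_space} measure"
  assumes "left_haar_measure M"
  shows "space M = UNIV" "sets M = sets borel" "\<And>N. measurable M N = measurable borel N"
    "\<And>h. distr M M (\<lambda>t. h + t) = M"
proof -
  show sM: "sets M = sets borel" using haarD(1)[OF assms] .
  then show sp: "space M = UNIV" using sets_eq_imp_space_eq by fastforce
  show MN: "\<And>N. measurable M N = measurable borel N" using measurable_cong_sets[OF sM refl] .
  fix h :: 'g
  have mb: "(\<lambda>t. h + t) \<in> measurable M M"
    unfolding measurable_cong_sets[OF sM sM] by (intro borel_measurable_continuous_onI continuous_intros)
  show "distr M M (\<lambda>t. h + t) = M"
  proof (rule measure_eqI)
    show "sets (distr M M (\<lambda>t. h + t)) = sets M" by simp
    fix A assume "A \<in> sets (distr M M (\<lambda>t. h + t))"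
    then have A: "A \<in> sets borel" using sM by simp
    have "(\<lambda>t. h + t) -` A \<inter> space M = (\<lambda>x. -h + x) ` A"
      unfolding sp
    proof safe
      fix x assume "h + x \<in> A" then show "x \<in> (\<lambda>x. -h + x) ` A"
        by (intro image_eqI[where x="h + x"]) (simp_all add: add.assoc[symmetric])
    qed (simp_all add: add.assoc[symmetric])
    then show "emeasure (distr M M (\<lambda>t. h + t)) A = emeasure M A"
      using emeasure_distr[OF mb, of A] haarD(3)[OF assms A, of "-h"] A sM by simp
  qed
qed

lemma haar_AE_transl:
  fixes M :: "'g::{topological_group_add, t2_space} measure"
  assumes "left_haar_measure M" "AE x in M. P x"
  shows "AE t in M. P (h + t)"
proof -
  have mb: "(\<lambda>t. h + t) \<in> measurable M M"
    unfolding measurable_cong_sets[OF haar_basic(2)[OF assms(1)] haar_basic(2)[OF assms(1)]]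
    by (intro borel_measurable_continuous_onI continuous_intros)
  show ?thesis using AE_distrD[OF mb] assms(2) haar_basic(4)[OF assms(1)] by metis
qed

lemma haar_nn_transl:
  fixes M :: "'g::{topological_group_add, t2_space} measure"
  assumes "left_haar_measure M" "u \<in> borel_measurable borel"
  shows "(\<integral>\<^sup>+ t. u (h + t) \<partial>M) = (\<integral>\<^sup>+ y. u y \<partial>M)"
proof -
  have mb: "(\<lambda>t. h + t) \<in> measurable M M"
    unfolding measurable_cong_sets[OF haar_basic(2)[OF assms(1)] haar_basic(2)[OF assms(1)]]
    by (intro borel_measurable_continuous_onI continuous_intros)
  have "u \<in> borel_measurable (distr M M (\<lambda>t. h + t))"
    using assms haar_basic[OF assms(1)] by simp
  from nn_integral_distr[OF mb this] show ?thesis using haar_basic(4)[OF assms(1)] by simp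
qed


theorem proposition5p3:
  fixes M :: "'g::{topological_group_add, t2_space} measure"
    and H :: "'g set" and c :: "'g \<Rightarrow> complex" and f :: "'g \<Rightarrow> complex"
  assumes "locally_compact_space (euclidean :: 'g topology)"
    and "sigma_compact_group TYPE('g)"
    and "left_haar_measure M"
    and "discrete_subgroup H"
    and "finite {h. c h \<noteq> 0}" and "{h. c h \<noteq> 0} \<subseteq> H"
    and "in_L2 M f" and "\<not> (AE x in M. f x = 0)"
    and "AE x in M. (\<Sum>h\<in>{h. c h \<noteq> 0}. c h * f (- h + x)) = 0"
  shows "\<exists>k. in_l2 H k \<and> (\<exists>x\<in>H. k x \<noteq> 0) \<and> (\<forall>g\<in>H. conv_gr H c k g = 0)"
proof -
  note sp = haar_basic(1)[OF assms(3)] and sM = haar_basic(2)[OF assms(3)]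
    and MN = haar_basic(3)[OF assms(3)]
  define S where "S = {h. c h \<noteq> 0}"
  have Sfin: "finite S" and SH: "S \<subseteq> H" using assms(5,6) S_def by auto
  have H0: "0 \<in> H" and Hadd: "\<And>x y. x \<in> H \<Longrightarrow> y \<in> H \<Longrightarrow> x + y \<in> H"
    and Hneg: "\<And>x. x \<in> H \<Longrightarrow> -x \<in> H"
    using discrete_subgroupD[OF assms(4)] by auto
  obtain K :: "nat \<Rightarrow> 'g set" where K: "\<And>n. compact (K n)" "(\<Union>n. K n) = UNIV"
    using assms(2) unfolding sigma_compact_group_def by blast
  have Kb[measurable]: "K n \<in> sets borel" for n using K(1) compact_imp_closed borel_closed by blast
  have Kfin: "emeasure M (K n) < \<infinity>" for n
    using haarD(2)[OF assms(3) K(1)] .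
  have Kfin': "emeasure M (K n) \<noteq> \<infinity>" for n using Kfin[of n] by (simp add: less_top)
  have Hfin: "finite (H \<inter> K n)" for n
  proof -
    obtain m where "\<forall>x. finite (H \<inter> (\<lambda>y. x + y) ` K n) \<and> card (H \<inter> (\<lambda>y. x + y) ` K n) \<le> m"
      using card_bound[OF assms(4) K(1)[of n]] by blast
    moreover have "(\<lambda>y. 0 + y) ` K n = K n" by simp
    ultimately show ?thesis by metis
  qed
  have "H = (\<Union>n. H \<inter> K n)" using K(2) by blast
  moreover have "countable (\<Union>n. H \<inter> K n)" by (rule countable_UN[OF countableI_type]) (rule countable_finite[OF Hfin])
  ultimately have Hc: "countable H" by simp
  interpret sf: sigma_finite_measure M
  proof
    show "\<exists>A. countable A \<and> A \<subseteq> sets M \<and> \<Union> A = space M \<and> (\<forall>a\<in>A. emeasure M a \<noteq> \<infinity>)"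
      using Kfin' K(2) by (intro exI[of _ "range K"]) (auto simp: sM sp)
  qed
  interpret pc: pair_sigma_finite "count_space H" M
    by (simp add: pair_sigma_finite_def sigma_finite_measure_count_space_countable[OF Hc] sf.sigma_finite_measure_axioms)
  have fb[measurable]: "f \<in> borel_measurable borel" using assms(7) unfolding in_L2_def MN by blast
  have tb[measurable]: "(\<lambda>t. h + t) \<in> borel_measurable borel" for h :: 'g
    by (intro borel_measurable_continuous_onI continuous_intros)
  have f2: "(\<integral>\<^sup>+ y. ennreal ((cmod (f y))\<^sup>2) \<partial>M) < \<infinity>"
    using assms(7) unfolding in_L2_def integrable_iff_bounded by simp
  have "\<exists>n. \<not> (AE t in M. t \<in> K n \<longrightarrow> f t = 0)"
  proof (rule ccontr)
    assume "\<not> ?thesis"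
    then have "\<forall>n. AE t in M. t \<in> K n \<longrightarrow> f t = 0" by blast
    then have "AE t in M. \<forall>n. t \<in> K n \<longrightarrow> f t = 0" by (rule AE_all_countable[THEN iffD2])
    then have "AE t in M. f t = 0" by eventually_elim (use K(2) in blast)
    with assms(8) show False by simp
  qed
  then obtain n where n: "\<not> (AE t in M. t \<in> K n \<longrightarrow> f t = 0)" ..
  define C where "C = K n"
  have Cc: "compact C" and Cb[measurable]: "C \<in> sets borel" using K(1) Kb C_def by auto
  have "compact (uminus ` C)"
    by (rule compact_continuous_image[OF _ Cc]) (intro continuous_intros)
  then obtain m where m: "\<And>x. finite (H \<inter> (\<lambda>y. x + y) ` (uminus ` C)) \<and> card (H \<inter> (\<lambda>y. x + y) ` (uminus ` C)) \<le> m"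
    using card_bound[OF assms(4)] by blast
  define F where "F h t = indicator C t * ennreal ((cmod (f (h + t)))\<^sup>2)" for h t
  define \<Psi> where "\<Psi> t = (\<integral>\<^sup>+ h. F h t \<partial>count_space H)" for t
  have Fm: "(\<lambda>t. F h t) \<in> borel_measurable M" for h unfolding MN F_def by measurable
  have Fm2: "case_prod F \<in> borel_measurable (count_space H \<Otimes>\<^sub>M M)"
    by (rule measurable_pair_measure_countable1[OF Hc]) (simp add: Fm)
  have Gm: "(\<lambda>y. indicator C (-h + y) * ennreal ((cmod (f y))\<^sup>2)) \<in> borel_measurable borel" for h
    by measurable
  have Gm2: "(\<lambda>(h, y). indicator C (-h + y) * ennreal ((cmod (f y))\<^sup>2)) \<in> borel_measurable (count_space H \<Otimes>\<^sub>M M)"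
    by (rule measurable_pair_measure_countable1[OF Hc]) (simp add: MN Gm)
  have \<Psi>m: "\<Psi> \<in> borel_measurable M"
  proof -
    have "(\<lambda>(t, h). F h t) \<in> borel_measurable (M \<Otimes>\<^sub>M count_space H)"
      using measurable_pair_swap[OF Fm2] by simp
    then show ?thesis unfolding \<Psi>_def
      using sigma_finite_measure.borel_measurable_nn_integral[OF sigma_finite_measure_count_space_countable[OF Hc], of "\<lambda>t h. F h t" M]
      by simp
  qed
  have cnt: "(\<integral>\<^sup>+ h. indicator C (-h + y) \<partial>count_space H) \<le> of_nat m" for y
  proof -
    define T where "T = H \<inter> (\<lambda>z. y + z) ` (uminus ` C)"
    have mem: "h \<in> (\<lambda>z. y + z) ` (uminus ` C) \<longleftrightarrow> -h + y \<in> C" for h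
    proof
      assume "h \<in> (\<lambda>z. y + z) ` (uminus ` C)"
      then obtain c where "c \<in> C" "h = y + - c" by blast
      then show "-h + y \<in> C" by (simp add: minus_add add.assoc)
    next
      assume "-h + y \<in> C"
      then have "y + - (-h + y) \<in> (\<lambda>z. y + z) ` (uminus ` C)" by blast
      then show "h \<in> (\<lambda>z. y + z) ` (uminus ` C)" by (simp add: minus_add add.assoc[symmetric])
    qed
    have "(\<integral>\<^sup>+ h. indicator C (-h + y) \<partial>count_space H) = (\<integral>\<^sup>+ h. indicator T h \<partial>count_space H)"
      by (intro nn_integral_cong) (simp add: T_def mem indicator_def)
    also have "\<dots> = emeasure (count_space H) T" by (simp add: T_def)
    also have "\<dots> = of_nat (card T)" using m[of y] T_def by simp
    also have "\<dots> \<le> of_nat m" using m[of y] T_def by simp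
    finally show ?thesis .
  qed
  have key: "(\<integral>\<^sup>+ t. \<Psi> t \<partial>M) < \<infinity>"
  proof -
    have "(\<integral>\<^sup>+ t. \<Psi> t \<partial>M) = (\<integral>\<^sup>+ h. (\<integral>\<^sup>+ t. F h t \<partial>M) \<partial>count_space H)"
      unfolding \<Psi>_def by (rule pc.Fubini'[OF Fm2])
    also have "\<dots> = (\<integral>\<^sup>+ h. (\<integral>\<^sup>+ y. indicator C (-h + y) * ennreal ((cmod (f y))\<^sup>2) \<partial>M) \<partial>count_space H)"
    proof (rule nn_integral_cong)
      fix h
      show "(\<integral>\<^sup>+ t. F h t \<partial>M) = (\<integral>\<^sup>+ y. indicator C (-h + y) * ennreal ((cmod (f y))\<^sup>2) \<partial>M)"
        using haar_nn_transl[OF assms(3) Gm[of h], of h] unfolding F_def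
        by (simp add: add.assoc[symmetric])
    qed
    also have "\<dots> = (\<integral>\<^sup>+ y. (\<integral>\<^sup>+ h. indicator C (-h + y) * ennreal ((cmod (f y))\<^sup>2) \<partial>count_space H) \<partial>M)"
      using pc.Fubini'[OF Gm2] by simp
    also have "\<dots> = (\<integral>\<^sup>+ y. (\<integral>\<^sup>+ h. indicator C (-h + y) \<partial>count_space H) * ennreal ((cmod (f y))\<^sup>2) \<partial>M)"
      by (intro nn_integral_cong nn_integral_multc) simp
    also have "\<dots> \<le> (\<integral>\<^sup>+ y. of_nat m * ennreal ((cmod (f y))\<^sup>2) \<partial>M)"
      by (intro nn_integral_mono mult_right_mono cnt) simp
    also have "\<dots> = of_nat m * (\<integral>\<^sup>+ y. ennreal ((cmod (f y))\<^sup>2) \<partial>M)"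
      by (rule nn_integral_cmult) (simp add: MN)
    also have "\<dots> < \<infinity>" using f2 by (simp add: ennreal_mult_less_top of_nat_less_top)
    finally show ?thesis .
  qed
  have AE1: "AE t in M. \<Psi> t \<noteq> \<infinity>" using nn_integral_PInf_AE[OF \<Psi>m] key by simp
  define P where "P x = ((\<Sum>h\<in>S. c h * f (- h + x)) = 0)" for x
  have AE2: "AE t in M. \<forall>g\<in>H. P (g + t)"
    unfolding AE_ball_countable[OF Hc]
    using haar_AE_transl[OF assms(3)] assms(9) unfolding P_def S_def by blast
  have "\<exists>t. t \<in> C \<and> f t \<noteq> 0 \<and> \<Psi> t \<noteq> \<infinity> \<and> (\<forall>g\<in>H. P (g + t))"
  proof (rule ccontr)
    assume nt: "\<not> ?thesis"
    have "AE t in M. t \<in> K n \<longrightarrow> f t = 0" using AE1 AE2 by eventually_elim (use nt C_def in blast)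
    with n show False by blast
  qed
  then obtain t where t: "t \<in> C" "f t \<noteq> 0" "\<Psi> t \<noteq> \<infinity>" "\<forall>g\<in>H. P (g + t)" by blast
  define k where "k x = (if x \<in> H then f (x + t) else 0)" for x
  show ?thesis
  proof (intro exI[of _ k] conjI)
    show "\<exists>x\<in>H. k x \<noteq> 0" using H0 t(2) by (intro bexI[of _ 0]) (simp_all add: k_def)
  next
    have "(\<integral>\<^sup>+ x. ennreal (norm ((cmod (k x))\<^sup>2)) \<partial>count_space H) = \<Psi> t"
      unfolding \<Psi>_def F_def using t(1) by (intro nn_integral_cong) (simp add: k_def)
    then have "integrable (count_space H) (\<lambda>x. (cmod (k x))\<^sup>2)"
      using t(3) by (simp add: integrable_iff_bounded top.not_eq_extremum)
    then have "(\<lambda>x. norm ((cmod (k x))\<^sup>2)) summable_on H"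
      using abs_summable_equivalent[of "\<lambda>x. (cmod (k x))\<^sup>2" H] Infinite_Set_Sum.abs_summable_on_def by blast
    then have "(\<lambda>x. (cmod (k x))\<^sup>2) summable_on H" by simp
    then show "in_l2 H k" unfolding in_l2_def k_def by simp
  next
    show "\<forall>g\<in>H. conv_gr H c k g = 0"
    proof
      fix g assume g: "g \<in> H"
      define Fs where "Fs = (\<lambda>h. -h + g) ` S"
      have FsH: "Fs \<subseteq> H" using SH g Hadd Hneg unfolding Fs_def by blast
      have inj: "inj_on (\<lambda>h. -h + g) S" by (rule inj_onI) simp
      have eq1: "g - (-h + g) = h" for h by (simp only: diff_conv_add_uminus minus_add minus_minus add_minus_cancel)
      have "conv_gr H c k g = (\<Sum>\<^sub>\<infinity>x\<in>Fs. c (g + - x) * k x)"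
        unfolding conv_gr_def
      proof (rule infsum_cong_neutral)
        fix x assume x: "x \<in> H - Fs"
        have "c (g + - x) = 0"
        proof (rule ccontr)
          assume "c (g + - x) \<noteq> 0"
          then have "g + - x \<in> S" by (simp add: S_def)
          moreover have "x = - (g + - x) + g" by (simp add: minus_add add.assoc)
          ultimately have "x \<in> Fs" unfolding Fs_def by blast
          with x show False by blast
        qed
        then show "c (g + - x) * k x = 0" by simp
      qed (use FsH in auto)
      also have "\<dots> = (\<Sum>x\<in>Fs. c (g + - x) * k x)" using Sfin Fs_def by simp
      also have "\<dots> = (\<Sum>h\<in>S. c h * k (-h + g))"
        unfolding Fs_def by (subst sum.reindex[OF inj]) (simp add: eq1)
      also have "\<dots> = (\<Sum>h\<in>S. c h * f (- h + (g + t)))"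
        using SH g Hadd Hneg by (intro sum.cong) (auto simp: k_def add.assoc)
      also have "\<dots> = 0" using t(4) g unfolding P_def by blast
      finally show "conv_gr H c k g = 0" .
    qed
  qed
qed

end
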